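(* Let $G$ be a connected graph and let $H$ be a connected component of the complement $\overline{G}$ such that $H$ is isomorphic to the complete graph $K_n$ for some $n\geq 2$. Then no vertex of $H$ is a basis forced vertex of $G$.
   Context: All graphs are finite and simple. $\overline{G}$ denotes the complement graph. For vertices $u,v$ of a connected graph $G$, $d(u,v)$ is the length of a shortest $u$–$v$ path. A set $R\subseteq V(G)$ is a resolving set if for all distinct $x,y\in V(G)$ there is $r\in R$ with $d(r,x)\neq d(r,y)$. The metric dimension $\dim(G)$ is the minimum cardinality of a resolving set, and a resolving set of cardinality $\dim(G)$ is a metric basis. A vertex is a basis forced vertex if it belongs to every metric basis of $G$. *)

theory Defs
  imports Main
begin

definition simple_graph :: "'a set \<Rightarrow> ('a \<Rightarrow> 'a \<Rightarrow> bool) \<Rightarrow> bool" where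
  "simple_graph V E \<longleftrightarrow> finite V \<and> (\<forall>x y. E x y \<longrightarrow> x \<in> V \<and> y \<in> V)
     \<and> (\<forall>x y. E x y \<longrightarrow> E y x) \<and> (\<forall>x. \<not> E x x)"

definition connected_graph :: "'a set \<Rightarrow> ('a \<Rightarrow> 'a \<Rightarrow> bool) \<Rightarrow> bool" where
  "connected_graph V E \<longleftrightarrow> V \<noteq> {} \<and> (\<forall>u\<in>V. \<forall>v\<in>V. E\<^sup>*\<^sup>* u v)"

definition gdist :: "('a \<Rightarrow> 'a \<Rightarrow> bool) \<Rightarrow> 'a \<Rightarrow> 'a \<Rightarrow> nat" where
  "gdist E u v = (LEAST n. (E ^^ n) u v)"

definition compl_graph :: "'a set \<Rightarrow> ('a \<Rightarrow> 'a \<Rightarrow> bool) \<Rightarrow> 'a \<Rightarrow> 'a \<Rightarrow> bool" where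
  "compl_graph V E x y \<longleftrightarrow> x \<in> V \<and> y \<in> V \<and> x \<noteq> y \<and> \<not> E x y"

definition induced :: "('a \<Rightarrow> 'a \<Rightarrow> bool) \<Rightarrow> 'a set \<Rightarrow> 'a \<Rightarrow> 'a \<Rightarrow> bool" where
  "induced E C x y \<longleftrightarrow> x \<in> C \<and> y \<in> C \<and> E x y"

definition is_component :: "'a set \<Rightarrow> ('a \<Rightarrow> 'a \<Rightarrow> bool) \<Rightarrow> 'a set \<Rightarrow> bool" where
  "is_component V E C \<longleftrightarrow> (\<exists>v\<in>V. C = {u \<in> V. E\<^sup>*\<^sup>* v u})"

definition graph_iso :: "'a set \<Rightarrow> ('a \<Rightarrow> 'a \<Rightarrow> bool) \<Rightarrow> 'b set \<Rightarrow> ('b \<Rightarrow> 'b \<Rightarrow> bool) \<Rightarrow> bool" where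
  "graph_iso V1 E1 V2 E2 \<longleftrightarrow> (\<exists>f. bij_betw f V1 V2 \<and>
     (\<forall>x\<in>V1. \<forall>y\<in>V1. E1 x y \<longleftrightarrow> E2 (f x) (f y)))"

definition K_verts :: "nat \<Rightarrow> nat set" where
  "K_verts n = {0..<n}"

definition K_edges :: "nat \<Rightarrow> nat \<Rightarrow> nat \<Rightarrow> bool" where
  "K_edges n i j \<longleftrightarrow> i < n \<and> j < n \<and> i \<noteq> j"

definition resolving_set :: "'a set \<Rightarrow> ('a \<Rightarrow> 'a \<Rightarrow> bool) \<Rightarrow> 'a set \<Rightarrow> bool" where
  "resolving_set V E R \<longleftrightarrow> R \<subseteq> V \<and>
     (\<forall>x\<in>V. \<forall>y\<in>V. x \<noteq> y \<longrightarrow> (\<exists>r\<in>R. gdist E r x \<noteq> gdist E r y))"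

definition metric_dim :: "'a set \<Rightarrow> ('a \<Rightarrow> 'a \<Rightarrow> bool) \<Rightarrow> nat" where
  "metric_dim V E = Min (card ` {R. resolving_set V E R})"

definition metric_basis :: "'a set \<Rightarrow> ('a \<Rightarrow> 'a \<Rightarrow> bool) \<Rightarrow> 'a set \<Rightarrow> bool" where
  "metric_basis V E R \<longleftrightarrow> resolving_set V E R \<and> card R = metric_dim V E"

definition basis_forced :: "'a set \<Rightarrow> ('a \<Rightarrow> 'a \<Rightarrow> bool) \<Rightarrow> 'a \<Rightarrow> bool" where
  "basis_forced V E v \<longleftrightarrow> (\<forall>R. metric_basis V E R \<longrightarrow> v \<in> R)"

end

theory Submission
  imports Defs
begin

lemma pow_sym:
  assumes "\<forall>x y. E x y \<longrightarrow> E y x"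
  shows "(E ^^ n) a b \<Longrightarrow> (E ^^ n) b a"
proof (induction n arbitrary: a b)
  case 0 then show ?case by simp
next
  case (Suc n)
  from Suc.prems obtain c where "(E ^^ n) a c" "E c b" by (auto elim: relpowp_Suc_E)
  then show ?case using Suc.IH assms by (meson relpowp_Suc_I2)
qed

lemma gdist_sym:
  assumes "\<forall>x y. E x y \<longrightarrow> E y x"
  shows "gdist E a b = gdist E b a"
proof -
  have "(\<lambda>n. (E ^^ n) a b) = (\<lambda>n. (E ^^ n) b a)"
    using pow_sym[OF assms] by blast
  then show ?thesis unfolding gdist_def by simp
qed

lemma twin_walk:
  assumes "(E ^^ n) r a" "r \<noteq> a" "\<forall>u. E u a \<longrightarrow> E u b"
  shows "(E ^^ n) r b"
proof (cases n)
  case 0 then show ?thesis using assms by simp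
next
  case (Suc m)
  then obtain u where "(E ^^ m) r u" "E u a" using assms(1) by (auto elim: relpowp_Suc_E)
  then show ?thesis using assms(3) Suc by (meson relpowp_Suc_I)
qed

lemma twin_gdist:
  assumes "r \<noteq> a" "r \<noteq> b" "\<forall>u. E u a \<longrightarrow> E u b" "\<forall>u. E u b \<longrightarrow> E u a"
  shows "gdist E r a = gdist E r b"
proof -
  have "(\<lambda>n. (E ^^ n) r a) = (\<lambda>n. (E ^^ n) r b)"
    using twin_walk[where E=E and r=r and a=a and b=b] twin_walk[where E=E and r=r and a=b and b=a] assms by blast
  then show ?thesis unfolding gdist_def by simp
qed

lemma gdist_self: "gdist E a a = 0"
  unfolding gdist_def by simp

lemma gdist_pos:
  assumes "E\<^sup>*\<^sup>* a b" "a \<noteq> b"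
  shows "gdist E a b \<noteq> 0"
proof
  assume h: "gdist E a b = 0"
  obtain k where "(E ^^ k) a b" using assms(1) rtranclp_imp_relpowp by metis
  then have "(E ^^ gdist E a b) a b" unfolding gdist_def by (rule LeastI)
  then show False using h assms(2) by simp
qed

lemma gdist_one:
  assumes "E a b" "a \<noteq> b"
  shows "gdist E a b = 1"
  unfolding gdist_def
proof (rule Least_equality)
  show "(E ^^ 1) a b" using assms relpowp_Suc_0[of E] by (metis One_nat_def)
  fix y assume "(E ^^ y) a b"
  then show "1 \<le> y" using assms(2) by (cases y) auto
qed

lemma gdist_not_one:
  assumes "E\<^sup>*\<^sup>* a b" "\<not> E a b"
  shows "gdist E a b \<noteq> 1"
proof
  assume h: "gdist E a b = 1"
  obtain k where "(E ^^ k) a b" using assms(1) rtranclp_imp_relpowp by metis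
  then have "(E ^^ gdist E a b) a b" unfolding gdist_def by (rule LeastI)
  then show False using h assms(2) relpowp_Suc_0[of E] by (metis One_nat_def)
qed

theorem lemma5:
  fixes V :: "'a set" and E :: "'a \<Rightarrow> 'a \<Rightarrow> bool" and C :: "'a set" and n :: nat
  assumes "simple_graph V E"
    and "connected_graph V E"
    and "is_component V (compl_graph V E) C"
    and "graph_iso C (induced (compl_graph V E) C) (K_verts n) (K_edges n)"
    and "n \<ge> 2"
  shows "\<forall>v\<in>C. \<not> basis_forced V E v"
proof
  fix v assume vC: "v \<in> C"
  have fin: "finite V" and inV: "\<And>x y. E x y \<Longrightarrow> x \<in> V \<and> y \<in> V"
    and sym: "\<forall>x y. E x y \<longrightarrow> E y x" and irr: "\<And>x. \<not> E x x"
    using assms(1) unfolding simple_graph_def by auto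
  have conn: "\<And>x y. x \<in> V \<Longrightarrow> y \<in> V \<Longrightarrow> E\<^sup>*\<^sup>* x y"
    using assms(2) unfolding connected_graph_def by auto
  obtain c where cV: "c \<in> V" and Cdef: "C = {u \<in> V. (compl_graph V E)\<^sup>*\<^sup>* c u}"
    using assms(3) unfolding is_component_def by auto
  have CV: "C \<subseteq> V" using Cdef by auto
  obtain f where bij: "bij_betw f C {0..<n}"
    and fE: "\<forall>x\<in>C. \<forall>y\<in>C. induced (compl_graph V E) C x y \<longleftrightarrow> K_edges n (f x) (f y)"
    using assms(4) unfolding graph_iso_def K_verts_def by auto
  have clique: "\<And>x y. x \<in> C \<Longrightarrow> y \<in> C \<Longrightarrow> x \<noteq> y \<Longrightarrow> \<not> E x y"
  proof -
    fix x y assume xy: "x \<in> C" "y \<in> C" "x \<noteq> y"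
    have "f x \<noteq> f y" using bij xy unfolding bij_betw_def inj_on_def by auto
    moreover have "f x < n" "f y < n" using bij xy unfolding bij_betw_def by auto
    ultimately have "K_edges n (f x) (f y)" unfolding K_edges_def by auto
    then have "induced (compl_graph V E) C x y" using fE xy by auto
    then show "\<not> E x y" unfolding induced_def compl_graph_def by auto
  qed
  have cross: "\<And>x u. x \<in> C \<Longrightarrow> u \<in> V \<Longrightarrow> u \<notin> C \<Longrightarrow> E x u"
  proof (rule ccontr)
    fix x u assume h: "x \<in> C" "u \<in> V" "u \<notin> C" "\<not> E x u"
    then have "x \<noteq> u" by auto
    then have "compl_graph V E x u" using h CV unfolding compl_graph_def by auto
    moreover have "(compl_graph V E)\<^sup>*\<^sup>* c x" using h Cdef by auto
    ultimately have "(compl_graph V E)\<^sup>*\<^sup>* c u" by auto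
    then show False using h Cdef by auto
  qed
  have twin: "\<And>a b. a \<in> C \<Longrightarrow> b \<in> C \<Longrightarrow> \<forall>u. E u a \<longrightarrow> E u b"
  proof (intro allI impI)
    fix a b u assume h: "a \<in> C" "b \<in> C" "E u a"
    have "u \<noteq> a" using h irr by auto
    then have "u \<notin> C" using clique h by auto
    moreover have "u \<in> V" using inV h by auto
    ultimately show "E u b" using cross h sym by auto
  qed
  have tg: "\<And>a b r. a \<in> C \<Longrightarrow> b \<in> C \<Longrightarrow> r \<noteq> a \<Longrightarrow> r \<noteq> b \<Longrightarrow> gdist E r a = gdist E r b"
    using twin twin_gdist by metis
  have cardC: "card C = n" using bij by (simp add: bij_betw_same_card)
  have finC: "finite C" using CV fin finite_subset by auto
  have "card (C - {v}) \<ge> 1" using cardC assms(5) vC finC by auto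
  then have ex: "\<exists>w. w \<in> C - {v}" by (metis card.empty ex_in_conv not_one_le_zero)
  define S where "S = {R. resolving_set V E R}"
  have VS: "V \<in> S" unfolding S_def mem_Collect_eq resolving_set_def
  proof (intro conjI ballI impI)
    fix x y assume "x \<in> V" "y \<in> V" "x \<noteq> y"
    then show "\<exists>r\<in>V. gdist E r x \<noteq> gdist E r y"
      using gdist_self gdist_pos conn by metis
  qed simp
  have finS: "finite (card ` S)"
  proof -
    have "S \<subseteq> Pow V" unfolding S_def resolving_set_def by auto
    then show ?thesis using fin by (meson finite_Pow_iff finite_imageI finite_subset)
  qed
  have "metric_dim V E \<in> card ` S"
    unfolding metric_dim_def S_def[symmetric] using finS VS by (intro Min_in) auto
  then obtain R where RS: "resolving_set V E R" and Rc: "card R = metric_dim V E"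
    unfolding S_def by auto
  show "\<not> basis_forced V E v"
  proof
    assume bf: "basis_forced V E v"
    then have vR: "v \<in> R" using RS Rc unfolding basis_forced_def metric_basis_def by auto
    obtain w where wC: "w \<in> C" "w \<noteq> v" and wR: "\<forall>y\<in>C - {v}. y \<notin> R \<longrightarrow> w \<notin> R"
      using ex by (cases "\<exists>w\<in>C - {v}. w \<notin> R") auto
    define R' where "R' = (R - {v}) \<union> {w}"
    have RV: "R \<subseteq> V" using RS unfolding resolving_set_def by auto
    have finR: "finite R" using RV fin finite_subset by auto
    have res: "resolving_set V E R'"
      unfolding resolving_set_def
    proof (intro conjI ballI impI)
      show "R' \<subseteq> V" using RV wC CV R'_def by auto
      fix x y assume xy: "x \<in> V" "y \<in> V" "x \<noteq> y"
      obtain r where r: "r \<in> R" "gdist E r x \<noteq> gdist E r y"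
        using RS xy unfolding resolving_set_def by blast
      show "\<exists>r\<in>R'. gdist E r x \<noteq> gdist E r y"
      proof (cases "r = v")
        case False then show ?thesis using r R'_def by auto
      next
        case rv: True
        have wR': "w \<in> R'" using R'_def by auto
        show ?thesis
        proof (cases "x = w \<or> y = w")
          case True
          then show ?thesis using wR' xy gdist_self gdist_pos conn by metis
        next
          case nw: False
          have key: "\<exists>r\<in>R'. gdist E r v \<noteq> gdist E r z"
            if z: "z \<in> V" "z \<noteq> v" "z \<noteq> w" for z
          proof (cases "z \<in> C")
            case True
            show ?thesis
            proof (cases "z \<in> R")
              case True
              then have "z \<in> R'" using R'_def z by auto
              moreover have "gdist E z z \<noteq> gdist E z v"
                using gdist_self[of E z] gdist_pos[OF conn[of z v]] z CV vC by auto
              ultimately show ?thesis by metis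
            next
              case False
              then have "w \<notin> R" using wR True z by auto
              then obtain r' where r': "r' \<in> R" "gdist E r' w \<noteq> gdist E r' z"
                using RS z CV wC False unfolding resolving_set_def by (metis subsetD)
              then have "r' \<noteq> w" "r' \<noteq> z" using \<open>w \<notin> R\<close> False by auto
              then show ?thesis using tg[OF wC(1) True] r' by auto
            qed
          next
            case False
            have "E w z" using cross wC False z by auto
            then have "gdist E w z = 1" using gdist_one z by metis
            moreover have "gdist E w v \<noteq> 1"
              using gdist_not_one conn clique wC vC CV by (metis subsetD)
            ultimately have "gdist E w v \<noteq> gdist E w z" by auto
            then show ?thesis using wR' by blast
          qed
          show ?thesis
          proof (cases "x = v")
            case True
            then show ?thesis using key[of y] xy nw by auto
          next
            case xv: False
            show ?thesis
            proof (cases "y = v")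
              case True
              then show ?thesis using key[of x] xy nw by fastforce
            next
              case False
              have "gdist E v x = gdist E w x"
                using tg[OF vC wC(1), of x] xv nw gdist_sym[OF sym, of v x] gdist_sym[OF sym, of w x] by simp
              moreover have "gdist E v y = gdist E w y"
                using tg[OF vC wC(1), of y] False nw gdist_sym[OF sym, of v y] gdist_sym[OF sym, of w y] by simp
              ultimately show ?thesis using r rv wR' by auto
            qed
          qed
        qed
      qed
    qed
    have "card R' \<le> card R"
    proof -
      have "card R' \<le> card (R - {v}) + card {w}" unfolding R'_def
        by (rule card_Un_le)
      also have "\<dots> = card R" using finR vR card_Diff_singleton[of v R] card_gt_0_iff[of R] by auto
      finally show ?thesis .
    qed
    moreover have "metric_dim V E \<le> card R'"
      unfolding metric_dim_def using finS res S_def by (intro Min_le) auto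
    ultimately have "metric_basis V E R'" using res Rc unfolding metric_basis_def by auto
    then have "v \<in> R'" using bf unfolding basis_forced_def by auto
    then show False using R'_def wC by auto
  qed
qed

end
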